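(* Let $u\in\mathbb{F}_q$ be such that $u^2-u+1$ is a non-square in $\mathbb{F}_q$, and let $\ell_u$ be the line $Y_3-3uY_2+3u^2Y_1-u^3Y_0=0,\ Y_1-Y_2=0$ of $\mathrm{PG}(3,q)$. Then the stabiliser of $\ell_u$ in $G$ has order $2$.
   Context: Let $q$ be a power of a prime $p\neq 2,3$. $G\le \mathrm{PGL}(4,q)$ is the image of $\mathrm{PGL}(2,q)$ under the homomorphism sending the projectivity with matrix $\begin{pmatrix}a&b\\c&d\end{pmatrix}$ to the projectivity with matrix $\begin{pmatrix} a^3&a^2b&ab^2&b^3\\ 3a^2c&a^2d+2abc&b^2c+2abd&3b^2d\\ 3ac^2&bc^2+2acd&ad^2+2bcd&3bd^2\\ c^3&c^2d&cd^2&d^3\end{pmatrix}$, acting on points $(Y_0,\dots,Y_3)$ of $\mathrm{PG}(3,q)$; $G\cong\mathrm{PGL}(2,q)$. *)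

theory Defs
  imports Main
begin

(* Vectors of F^4 are lists of length 4 (coordinates Y0,Y1,Y2,Y3).
   A point of PG(3,q) is the set of all nonzero scalar multiples of a nonzero vector. *)
definition pt :: "'a::field list \<Rightarrow> 'a list set" where
  "pt v = {map (\<lambda>y. c * y) v | c. c \<noteq> 0}"

definition PG3 :: "'a::field list set set" where
  "PG3 = {pt v | v. length v = 4 \<and> v \<noteq> replicate 4 0}"

definition vecmat :: "'a::field list \<Rightarrow> 'a list list \<Rightarrow> 'a list" where
  "vecmat v M = map (\<lambda>j. \<Sum>i<4. v ! i * (M ! i ! j)) [0..<4]"

definition proj :: "'a::field list list \<Rightarrow> 'a list set \<Rightarrow> 'a list set" where
  "proj M = (\<lambda>P. if P \<in> PG3 then (\<lambda>v. vecmat v M) ` P else undefined)"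

definition nu :: "'a::field \<Rightarrow> 'a \<Rightarrow> 'a \<Rightarrow> 'a \<Rightarrow> 'a list list" where
  "nu a b c d =
    [[a^3, a^2*b, a*b^2, b^3],
     [3*a^2*c, a^2*d + 2*a*b*c, b^2*c + 2*a*b*d, 3*b^2*d],
     [3*a*c^2, b*c^2 + 2*a*c*d, a*d^2 + 2*b*c*d, 3*b*d^2],
     [c^3, c^2*d, c*d^2, d^3]]"

(* the group G: image of PGL(2,q), as a set of permutations of the points of PG(3,q) *)
definition G :: "('a::field list set \<Rightarrow> 'a list set) set" where
  "G = {proj (nu a b c d) | a b c d. a * d - b * c \<noteq> 0}"

definition ell :: "'a::field \<Rightarrow> 'a list set set" where
  "ell u = {P \<in> PG3. \<forall>Y\<in>P. Y!3 - 3*u*Y!2 + 3*u^2*Y!1 - u^3*Y!0 = 0 \<and> Y!1 - Y!2 = 0}"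

definition stabiliser :: "('a::field list set \<Rightarrow> 'a list set) set \<Rightarrow> 'a list set set
    \<Rightarrow> ('a list set \<Rightarrow> 'a list set) set" where
  "stabiliser H S = {g \<in> H. g ` S = S}"

end

theory Submission imports Defs begin

lemma vecmat4: "vecmat [y0,y1,y2,y3] M =
  [y0*M!0!0 + y1*M!1!0 + y2*M!2!0 + y3*M!3!0,
   y0*M!0!1 + y1*M!1!1 + y2*M!2!1 + y3*M!3!1,
   y0*M!0!2 + y1*M!1!2 + y2*M!2!2 + y3*M!3!2,
   y0*M!0!3 + y1*M!1!3 + y2*M!2!3 + y3*M!3!3]"
  by (simp add: vecmat_def eval_nat_numeral upt_rec lessThan_Suc add.commute add.left_commute)

lemma vecmat_nu: "vecmat [y0,y1,y2,y3] (nu a b c d) =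
  [y0*a^3 + y1*(3*a^2*c) + y2*(3*a*c^2) + y3*c^3,
   y0*(a^2*b) + y1*(a^2*d + 2*a*b*c) + y2*(b*c^2 + 2*a*c*d) + y3*(c^2*d),
   y0*(a*b^2) + y1*(b^2*c + 2*a*b*d) + y2*(a*d^2 + 2*b*c*d) + y3*(c*d^2),
   y0*b^3 + y1*(3*b^2*d) + y2*(3*b*d^2) + y3*d^3]"
  by (simp add: vecmat4 nu_def)

lemma len4: "length v = 4 \<Longrightarrow> \<exists>y0 y1 y2 y3. v = [y0,y1,y2,y3]"
  by (cases v rule: rev_cases; simp; metis length_Suc_conv numeral_3_eq_3 length_0_conv)

lemma hom: "vecmat (vecmat [y0,y1,y2,y3] (nu a b c d)) (nu a' b' c' d') =
   vecmat [y0,y1,y2,y3] (nu (a*a'+b*c') (a*b'+b*d') (c*a'+d*c') (c*b'+d*d'))"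
  unfolding vecmat_nu by (simp; algebra)

lemma core:
 fixes a b c d u :: "'a::field"
 assumes t2: "(2::'a)\<noteq>0" and t3: "(3::'a)\<noteq>0" and u0: "u\<noteq>0" and u1: "u\<noteq>1"
   and uq: "u^2-u+1\<noteq>0" and det: "a*d-b*c\<noteq>0"
 and H1: "a*b*(a-b) + u^3*(c*d*(c-d)) = 0"
 and H2: "(b-u*a)^3 + u^3*(d-u*c)^3 = 0"
 and H3: "(a+c)*(b+d)*((a-b)+(c-d)) - a*b*(a-b) - c*d*(c-d) + (3*u-3*u^2)*(c*d*(c-d)) = 0"
 and H4: "3*(b-u*a)^2*(d-u*c) + 3*(b-u*a)*(d-u*c)^2 + (3*u-3*u^2)*(d-u*c)^3 = 0"
 shows "(\<exists>l. l\<noteq>0 \<and> a=l \<and> b=0 \<and> c=0 \<and> d=l) \<or>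
   (\<exists>l. l\<noteq>0 \<and> a = l*(- (u^2) - u) \<and> b = l*(2*u^3-4*u^2) \<and> c = l*(4*u-2) \<and> d = l*(u^2+u))"
proof -
  define \<alpha> where "\<alpha> = b-u*a"
  define \<beta> where "\<beta> = d-u*c"
  have det2: "a*d-b*c = a*\<beta> - \<alpha>*c" unfolding \<alpha>_def \<beta>_def by algebra
  have b0: "\<beta> \<noteq> 0"
  proof
    assume "\<beta> = 0"
    with H2 have "\<alpha>^3 = 0" unfolding \<alpha>_def[symmetric] \<beta>_def[symmetric] by simp
    hence "\<alpha> = 0" by simp
    with \<open>\<beta> = 0\<close> det det2 show False by simp
  qed
  have f: "3*\<beta>*((\<alpha>+u*\<beta>)*(\<alpha>+(1-u)*\<beta>)) = 0" using H4 unfolding \<alpha>_def \<beta>_def by algebra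
  have H2': "\<alpha>^3 + u^3*\<beta>^3 = 0" using H2 unfolding \<alpha>_def \<beta>_def .
  have aeq: "\<alpha> = -u*\<beta>"
  proof (cases "\<alpha>+u*\<beta> = 0")
    case True then show ?thesis by (simp add: algebra_simps eq_neg_iff_add_eq_0)
  next
    case False
    from f t3 b0 have "(\<alpha>+u*\<beta>)*(\<alpha>+(1-u)*\<beta>) = 0" by simp
    with False have "\<alpha>+(1-u)*\<beta> = 0" by simp
    hence h: "\<alpha> = (u-1)*\<beta>" by algebra
    have "\<beta>^3*((2*u-1)*(u^2-u+1)) = 0" using H2' h by algebra
    with b0 uq have "2*u-1 = 0" by simp
    hence "u-1 = -u" by (simp add: algebra_simps)
    with h show ?thesis by simp
  qed
  have B: "b = u*a - u*d + u^2*c" using aeq unfolding \<alpha>_def \<beta>_def by algebra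
  define A where "A = a+u*c"
  define K where "K = d-u*c"
  have dAK: "a*d-b*c = A*K" using B unfolding A_def K_def by algebra
  with det have A0: "A\<noteq>0" and K0: "K\<noteq>0" by auto
  have q1: "u*A*((1-u)*A^2 + A*((2*u-1)*K + 3*u*(u-1)*c) - u*(K^2 + (4*u-2)*K*c + 3*u*(u-1)*c^2)) = 0"
    using H1 B unfolding A_def K_def by algebra
  have q2: "A*(-A*((2*u-1)*K + 3*u*(u-1)*c) + (2*u-1)*(K^2 + (4*u-2)*K*c + 3*u*(u-1)*c^2)) = 0"
    using H3 B unfolding A_def K_def by algebra
  from q1 u0 A0 have q1': "(1-u)*A^2 + A*((2*u-1)*K + 3*u*(u-1)*c) - u*(K^2 + (4*u-2)*K*c + 3*u*(u-1)*c^2) = 0"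
    by simp
  from q2 A0 have q2': "-A*((2*u-1)*K + 3*u*(u-1)*c) + (2*u-1)*(K^2 + (4*u-2)*K*c + 3*u*(u-1)*c^2) = 0"
    by simp
  have "(1-u)*(A^2 - (K^2 + (4*u-2)*K*c + 3*u*(u-1)*c^2)) = 0" using q1' q2' by algebra
  with u1 have Qn: "A^2 = K^2 + (4*u-2)*K*c + 3*u*(u-1)*c^2" by simp
  have "A*((2*u-1)*K + 3*u*(u-1)*c - (2*u-1)*A) = 0" using q2' Qn by algebra
  with A0 have E: "(2*u-1)*K + 3*u*(u-1)*c = (2*u-1)*A" by simp
  have "(u^2-u+1)*((A-K)*(A+K)) = 0" using E Qn by algebra
  with uq have AK: "A = K \<or> A = -K" by (simp add: eq_neg_iff_add_eq_0)
  have m0: "3*u*(u-1) \<noteq> 0" using t3 u0 u1 by simp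
  show ?thesis
  proof (cases "A = K")
    case True
    with E have "3*u*(u-1)*c = 0" by simp
    with m0 have c0: "c = 0" by simp
    with True have ad: "a = d" unfolding A_def K_def by simp
    with B c0 have "b = 0" by simp
    moreover have "a \<noteq> 0" using A0 c0 unfolding A_def by simp
    ultimately show ?thesis using c0 ad by auto
  next
    case False
    with AK have AmK: "A = -K" by simp
    with E have cK: "3*u*(u-1)*c = -2*(2*u-1)*K" by algebra
    define l where "l = -K/(3*u*(u-1))"
    have l0: "l \<noteq> 0" using K0 m0 unfolding l_def by simp
    have cl: "c = l*(4*u-2)" unfolding l_def using m0 cK by (simp add: field_simps; algebra)
    have al: "a = l*(- (u^2) - u)" unfolding l_def using m0 cK AmK unfolding A_def
      by (simp add: field_simps; algebra)
    have dl: "d = l*(u^2+u)" unfolding l_def using m0 cK AmK unfolding A_def K_def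
      by (simp add: field_simps; algebra)
    have bl: "b = l*(2*u^3-4*u^2)" unfolding l_def using m0 cK AmK B unfolding A_def K_def
      by (simp add: field_simps; algebra)
    show ?thesis using l0 al bl cl dl by blast
  qed
qed

lemma pt_mem: "w \<in> pt v \<longleftrightarrow> (\<exists>c. c \<noteq> 0 \<and> w = map (\<lambda>y. c*y) v)"
  unfolding pt_def by auto

lemma pt_map: "(k::'a::field) \<noteq> 0 \<Longrightarrow> pt (map (\<lambda>y. k*y) v) = pt v"
proof -
  assume k: "k \<noteq> 0"
  show ?thesis
  proof (rule set_eqI)
    fix w
    show "w \<in> pt (map (\<lambda>y. k*y) v) \<longleftrightarrow> w \<in> pt v"
    proof
      assume "w \<in> pt (map (\<lambda>y. k*y) v)"
      then obtain c where "c\<noteq>0" "w = map (\<lambda>y. c*y) (map (\<lambda>y. k*y) v)" by (auto simp: pt_mem)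
      then show "w \<in> pt v" using k unfolding pt_mem by (intro exI[of _ "c*k"]) (auto simp: mult.assoc)
    next
      assume "w \<in> pt v"
      then obtain c where "c\<noteq>0" "w = map (\<lambda>y. c*y) v" by (auto simp: pt_mem)
      then show "w \<in> pt (map (\<lambda>y. k*y) v)" using k unfolding pt_mem
        by (intro exI[of _ "c/k"]) auto
    qed
  qed
qed

lemma vm_scale: "vecmat [k*y0,k*y1,k*y2,k*y3] M = map (\<lambda>y. k*y) (vecmat [y0,y1,y2,y3] M)"
  by (simp add: vecmat4 algebra_simps)

lemma image_pt4: "(\<lambda>w. vecmat w M) ` pt [y0,y1,y2,y3] = pt (vecmat [y0,y1,y2,y3] M)"
proof (rule set_eqI)
  fix w
  show "w \<in> (\<lambda>w. vecmat w M) ` pt [y0,y1,y2,y3] \<longleftrightarrow> w \<in> pt (vecmat [y0,y1,y2,y3] M)"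
  proof
    assume "w \<in> (\<lambda>w. vecmat w M) ` pt [y0,y1,y2,y3]"
    then obtain z where z: "z \<in> pt [y0,y1,y2,y3]" "w = vecmat z M" by blast
    from z(1) obtain k where "k \<noteq> 0" "z = [k*y0,k*y1,k*y2,k*y3]" unfolding pt_mem by auto
    with z have "k \<noteq> 0" "w = vecmat [k*y0,k*y1,k*y2,k*y3] M" by auto
    then show "w \<in> pt (vecmat [y0,y1,y2,y3] M)" unfolding pt_mem vm_scale by blast
  next
    assume "w \<in> pt (vecmat [y0,y1,y2,y3] M)"
    then obtain k where k: "k \<noteq> 0" "w = vecmat [k*y0,k*y1,k*y2,k*y3] M" unfolding pt_mem vm_scale by auto
    have "[k*y0,k*y1,k*y2,k*y3] \<in> pt [y0,y1,y2,y3]" unfolding pt_mem using k by auto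
    with k show "w \<in> (\<lambda>w. vecmat w M) ` pt [y0,y1,y2,y3]" by blast
  qed
qed

lemma PG3_pt: "[y0,y1,y2,y3] \<noteq> [0,0,0,0] \<Longrightarrow> pt [y0,y1,y2,y3] \<in> PG3"
  unfolding PG3_def by (rule CollectI, rule exI[of _ "[y0,y1,y2,y3]"]) (simp add: numeral_eq_Suc)

lemma PG3_E: assumes "P \<in> PG3"
  obtains y0 y1 y2 y3 where "P = pt [y0,y1,y2,y3]" "[y0,y1,y2,y3] \<noteq> [0,0,0,0]"
proof -
  from assms obtain v where v: "P = pt v" "length v = 4" "v \<noteq> replicate 4 0" unfolding PG3_def by auto
  from len4[OF v(2)] obtain y0 y1 y2 y3 where "v = [y0,y1,y2,y3]" by blast
  with v that show ?thesis by (simp add: numeral_eq_Suc)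
qed

lemma proj_pt: "[y0,y1,y2,y3] \<noteq> [0,0,0,0] \<Longrightarrow> proj M (pt [y0,y1,y2,y3]) = pt (vecmat [y0,y1,y2,y3] M)"
proof -
  assume "[y0,y1,y2,y3] \<noteq> [0,0,0,0]"
  then have "pt [y0,y1,y2,y3] \<in> PG3" by (rule PG3_pt)
  then show ?thesis unfolding proj_def by (simp add: image_pt4)
qed

lemma nu_diag: "vecmat [y0,y1,y2,y3] (nu k 0 0 k) = [k^3*y0, k^3*y1, k^3*y2, k^3*y3]"
  unfolding vecmat_nu by (simp; algebra)

lemma nonzero:
  assumes "[y0,y1,y2,y3] \<noteq> [0,0,0,0]" "a*d-b*c \<noteq> (0::'a::field)"
  shows "vecmat [y0,y1,y2,y3] (nu a b c d) \<noteq> [0,0,0,0]"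
proof
  assume h: "vecmat [y0,y1,y2,y3] (nu a b c d) = [0,0,0,0]"
  have "vecmat (vecmat [y0,y1,y2,y3] (nu a b c d)) (nu d (-b) (-c) a) =
     vecmat [y0,y1,y2,y3] (nu (a*d-b*c) 0 0 (a*d-b*c))"
    unfolding hom by (rule arg_cong[where f="\<lambda>M. vecmat _ M"]) (simp add: algebra_simps)
  also have "\<dots> = [(a*d-b*c)^3*y0, (a*d-b*c)^3*y1, (a*d-b*c)^3*y2, (a*d-b*c)^3*y3]" by (rule nu_diag)
  finally have "[(a*d-b*c)^3*y0, (a*d-b*c)^3*y1, (a*d-b*c)^3*y2, (a*d-b*c)^3*y3] = [0,0,0,0]"
    using h by (simp add: vecmat4)
  with assms show False by simp
qed

lemma scale_nu: "vecmat [y0,y1,y2,y3] (nu (l*a) (l*b) (l*c) (l*d)) =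
   map (\<lambda>y. l^3*y) (vecmat [y0,y1,y2,y3] (nu a b c d))"
  unfolding vecmat_nu by (simp; algebra)

lemma proj_scale: "(l::'a::field) \<noteq> 0 \<Longrightarrow> proj (nu (l*a) (l*b) (l*c) (l*d)) = proj (nu a b c d)"
proof (rule ext)
  fix P :: "'a list set"
  assume l: "l \<noteq> 0"
  show "proj (nu (l*a) (l*b) (l*c) (l*d)) P = proj (nu a b c d) P"
  proof (cases "P \<in> PG3")
    case True
    then obtain y0 y1 y2 y3 where P: "P = pt [y0,y1,y2,y3]" "[y0,y1,y2,y3] \<noteq> [0,0,0,0]" by (rule PG3_E)
    show ?thesis unfolding P(1) proj_pt[OF P(2)] scale_nu using l by (simp add: pt_map)
  next
    case False then show ?thesis unfolding proj_def by simp
  qed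
qed

definition lin1 :: "'a::field list \<Rightarrow> 'a" where "lin1 Y = Y!1 - Y!2"
definition lin2 :: "'a::field \<Rightarrow> 'a list \<Rightarrow> 'a" where
  "lin2 u Y = Y!3 - 3*u*Y!2 + 3*u^2*Y!1 - u^3*Y!0"

lemma ell_pt: "[y0,y1,y2,y3] \<noteq> [0,0,0,0] \<Longrightarrow>
  pt [y0,y1,y2,y3] \<in> ell u \<longleftrightarrow> lin1 [y0,y1,y2,y3] = 0 \<and> lin2 u [y0,y1,y2,y3] = 0"
proof -
  assume nz: "[y0,y1,y2,y3] \<noteq> [0,0,0,0]"
  have "(\<forall>Y\<in>pt [y0,y1,y2,y3]. Y!3 - 3*u*Y!2 + 3*u^2*Y!1 - u^3*Y!0 = 0 \<and> Y!1 - Y!2 = 0)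
     \<longleftrightarrow> lin1 [y0,y1,y2,y3] = 0 \<and> lin2 u [y0,y1,y2,y3] = 0"
  proof
    assume "\<forall>Y\<in>pt [y0,y1,y2,y3]. Y!3 - 3*u*Y!2 + 3*u^2*Y!1 - u^3*Y!0 = 0 \<and> Y!1 - Y!2 = 0"
    moreover have "[y0,y1,y2,y3] \<in> pt [y0,y1,y2,y3]" unfolding pt_mem by (intro exI[of _ 1]) simp
    ultimately show "lin1 [y0,y1,y2,y3] = 0 \<and> lin2 u [y0,y1,y2,y3] = 0" unfolding lin1_def lin2_def by auto
  next
    assume h: "lin1 [y0,y1,y2,y3] = 0 \<and> lin2 u [y0,y1,y2,y3] = 0"
    show "\<forall>Y\<in>pt [y0,y1,y2,y3]. Y!3 - 3*u*Y!2 + 3*u^2*Y!1 - u^3*Y!0 = 0 \<and> Y!1 - Y!2 = 0"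
    proof
      fix Y assume "Y \<in> pt [y0,y1,y2,y3]"
      then obtain k where Y: "Y = [k*y0,k*y1,k*y2,k*y3]" unfolding pt_mem by auto
      have e1: "y3 - 3*u*y2 + 3*u^2*y1 - u^3*y0 = 0" "y1 - y2 = 0" using h unfolding lin1_def lin2_def by auto
      have "k*y3 - 3*u*(k*y2) + 3*u^2*(k*y1) - u^3*(k*y0) = k*(y3 - 3*u*y2 + 3*u^2*y1 - u^3*y0)"
        by (simp add: algebra_simps)
      with e1 show "Y!3 - 3*u*Y!2 + 3*u^2*Y!1 - u^3*Y!0 = 0 \<and> Y!1 - Y!2 = 0" unfolding Y
        by (simp add: right_diff_distrib[symmetric])
    qed
  qed
  then show ?thesis unfolding ell_def using PG3_pt[OF nz] by simp
qed

lemma linE1: "lin1 (vecmat [1,0,0,u^3] (nu a b c d)) = a*b*(a-b) + u^3*(c*d*(c-d))"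
  unfolding lin1_def vecmat_nu by (simp; algebra)
lemma linE2: "lin2 u (vecmat [1,0,0,u^3] (nu a b c d)) = (b-u*a)^3 + u^3*(d-u*c)^3"
  unfolding lin2_def vecmat_nu by (simp; algebra)
lemma linF1: "lin1 (vecmat [0,1,1,3*u-3*u^2] (nu a b c d)) =
   (a+c)*(b+d)*((a-b)+(c-d)) - a*b*(a-b) - c*d*(c-d) + (3*u-3*u^2)*(c*d*(c-d))"
  unfolding lin1_def vecmat_nu by (simp; algebra)
lemma linF2: "lin2 u (vecmat [0,1,1,3*u-3*u^2] (nu a b c d)) =
   3*(b-u*a)^2*(d-u*c) + 3*(b-u*a)*(d-u*c)^2 + (3*u-3*u^2)*(d-u*c)^3"
  unfolding lin2_def vecmat_nu by (simp; algebra)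


lemma ell_lin: "pt w \<in> ell u \<Longrightarrow> lin1 w = 0 \<and> lin2 u w = 0"
proof -
  assume "pt w \<in> ell u"
  moreover have "w \<in> pt w" unfolding pt_mem by (intro exI[of _ 1]) (simp add: map_idI)
  ultimately show ?thesis unfolding ell_def lin1_def lin2_def by auto
qed

lemma pt_mem_self: "w \<in> pt w"
  unfolding pt_mem by (intro exI[of _ 1]) (simp add: map_idI)

lemma ex4: "\<exists>w0 w1 w2 w3. vecmat [y0,y1,y2,y3] M = [w0,w1,w2,w3]"
  by (simp add: vecmat4)

lemma M2_line:
  fixes u :: "'a::field"
  assumes "lin1 [y0,y1,y2,y3] = 0" "lin2 u [y0,y1,y2,y3] = 0"
  shows "lin1 (vecmat [y0,y1,y2,y3] (nu (- (u^2) - u) (2*u^3-4*u^2) (4*u-2) (u^2+u))) = 0 \<and>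
         lin2 u (vecmat [y0,y1,y2,y3] (nu (- (u^2) - u) (2*u^3-4*u^2) (4*u-2) (u^2+u))) = 0"
proof -
  have h1: "y1 - y2 = 0" and h2: "y3 - 3*u*y2 + 3*u^2*y1 - u^3*y0 = 0"
    using assms unfolding lin1_def lin2_def by auto
  show ?thesis unfolding lin1_def lin2_def vecmat_nu
    apply simp
    apply (rule conjI)
    using h1 h2 apply algebra
    using h1 h2 apply algebra
    done
qed

theorem mainTheorem7:
  fixes u :: "'a::{field, finite}"
  assumes "(2::'a) \<noteq> 0" and "(3::'a) \<noteq> 0"
    and "\<not> (\<exists>x::'a. x^2 = u^2 - u + 1)"
  shows "card (stabiliser (G :: ('a list set \<Rightarrow> 'a list set) set) (ell u)) = 2"
proof -
  note t2 = assms(1) and t3 = assms(2)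
  have u0: "u \<noteq> 0"
  proof
    assume "u = 0" hence "(1::'a)^2 = u^2-u+1" by simp
    with assms(3) show False by blast
  qed
  have u1: "u \<noteq> 1"
  proof
    assume "u = 1" hence "(1::'a)^2 = u^2-u+1" by simp
    with assms(3) show False by blast
  qed
  have uq: "u^2-u+1 \<noteq> 0"
  proof
    assume "u^2-u+1 = 0" hence "(0::'a)^2 = u^2-u+1" by simp
    with assms(3) show False by blast
  qed
  have n9: "(9::'a) \<noteq> 0"
  proof
    assume h9: "(9::'a) = 0"
    have "(3::'a)*3 = 9" by simp
    moreover have "(3::'a)*3 \<noteq> 0" by (rule no_zero_divisors[OF t3 t3])
    ultimately show False using h9 by simp
  qed
  have um1: "u - 1 \<noteq> 0" using u1 by simp
  define a0 where "a0 = - (u^2) - u"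
  define b0 where "b0 = 2*u^3-4*u^2"
  define c0 where "c0 = 4*u-2"
  define d0 where "d0 = u^2+u"
  have det0: "a0*d0 - b0*c0 = -(9*u^2*(u-1)^2)" unfolding a0_def b0_def c0_def d0_def by algebra
  have det0': "a0*d0 - b0*c0 \<noteq> 0" unfolding det0 using t3 u0 u1
    using n9 um1 by simp
  define g1 :: "'a list set \<Rightarrow> 'a list set" where "g1 = proj (nu 1 0 0 1)"
  define g2 :: "'a list set \<Rightarrow> 'a list set" where "g2 = proj (nu a0 b0 c0 d0)"
  have g1G: "g1 \<in> G" unfolding G_def g1_def by (rule CollectI, rule exI[of _ 1], rule exI[of _ 0], rule exI[of _ 0], rule exI[of _ 1]) simp
  have g2G: "g2 \<in> G" unfolding G_def g2_def using det0' by blast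
  have ellPG: "\<And>P. P \<in> ell u \<Longrightarrow> P \<in> PG3" unfolding ell_def by auto
  have g1id: "\<And>P. P \<in> ell u \<Longrightarrow> g1 P = P"
  proof -
    fix P assume "P \<in> ell u"
    then obtain y0 y1 y2 y3 where P: "P = pt [y0,y1,y2,y3]" "[y0,y1,y2,y3] \<noteq> [0,0,0,0]"
      using ellPG PG3_E by metis
    show "g1 P = P" unfolding g1_def P(1) proj_pt[OF P(2)] by (simp add: vecmat_nu)
  qed
  have g1S: "g1 ` ell u = ell u" using g1id by simp
  have g2in: "\<And>P. P \<in> ell u \<Longrightarrow> g2 P \<in> ell u \<and> g2 (g2 P) = P"
  proof -
    fix P assume Pe: "P \<in> ell u"
    then obtain y0 y1 y2 y3 where P: "P = pt [y0,y1,y2,y3]" "[y0,y1,y2,y3] \<noteq> [0,0,0,0]"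
      using ellPG PG3_E by metis
    have lins: "lin1 [y0,y1,y2,y3] = 0" "lin2 u [y0,y1,y2,y3] = 0" using ell_lin[of "[y0,y1,y2,y3]" u] Pe P by auto
    obtain w0 w1 w2 w3 where w: "vecmat [y0,y1,y2,y3] (nu a0 b0 c0 d0) = [w0,w1,w2,w3]"
      using ex4 by blast
    have wnz: "[w0,w1,w2,w3] \<noteq> [0,0,0,0]" using nonzero[OF P(2) det0'] w by simp
    have g2P: "g2 P = pt [w0,w1,w2,w3]" unfolding g2_def P(1) proj_pt[OF P(2)] w ..
    have "lin1 [w0,w1,w2,w3] = 0 \<and> lin2 u [w0,w1,w2,w3] = 0"
      using M2_line[OF lins] w unfolding a0_def b0_def c0_def d0_def by simp
    hence in1: "g2 P \<in> ell u" unfolding g2P using ell_pt[OF wnz] by simp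
    define k where "k = a0*a0 + b0*c0"
    have k0: "k \<noteq> 0"
    proof -
      have "a0*a0 + b0*c0 = 9*u^2*(u-1)^2" unfolding a0_def b0_def c0_def by algebra
      then show ?thesis using n9 u0 um1 by (simp add: k_def)
    qed
    have kk: "a0*b0 + b0*d0 = 0" "c0*a0+d0*c0 = 0" "c0*b0 + d0*d0 = k"
      unfolding k_def a0_def b0_def c0_def d0_def by algebra+
    have "vecmat [w0,w1,w2,w3] (nu a0 b0 c0 d0) = vecmat [y0,y1,y2,y3] (nu k 0 0 k)"
      unfolding w[symmetric] hom
      by (rule arg_cong[where f="\<lambda>M. vecmat _ M"]) (simp add: kk k_def)
    also have "\<dots> = map (\<lambda>y. k^3*y) [y0,y1,y2,y3]" by (simp add: nu_diag)
    finally have "g2 (g2 P) = pt (map (\<lambda>y. k^3*y) [y0,y1,y2,y3])"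
      unfolding g2P unfolding g2_def proj_pt[OF wnz] by simp
    also have "\<dots> = P" unfolding P(1) using k0 by (simp add: pt_map del: list.map)
    finally show "g2 P \<in> ell u \<and> g2 (g2 P) = P" using in1 by simp
  qed
  have g2S: "g2 ` ell u = ell u"
  proof
    show "g2 ` ell u \<subseteq> ell u" using g2in by auto
    show "ell u \<subseteq> g2 ` ell u"
    proof
      fix P assume "P \<in> ell u"
      with g2in have "g2 P \<in> ell u" "P = g2 (g2 P)" by auto
      then show "P \<in> g2 ` ell u" by blast
    qed
  qed
  have pe: "pt [1,0,0,u^3] \<in> ell u"
    by (subst ell_pt) (auto simp: lin1_def lin2_def)
  have pf: "pt [0,1,1,3*u-3*u^2] \<in> ell u"
    by (subst ell_pt) (auto simp: lin1_def lin2_def algebra_simps)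
  have conv: "\<And>g. g \<in> stabiliser G (ell u) \<Longrightarrow> g = g1 \<or> g = g2"
  proof -
    fix g assume gS: "g \<in> stabiliser G (ell u)"
    then obtain a b c d where g: "g = proj (nu a b c d)" and det: "a*d-b*c \<noteq> 0" and
      st: "g ` ell u = ell u" unfolding stabiliser_def G_def by auto
    have nzv: "[1,0,0,u^3] \<noteq> [0,0,0,0]" by simp
    have "g (pt [1,0,0,u^3]) \<in> ell u" using pe st by blast
    hence "pt (vecmat [1,0,0,u^3] (nu a b c d)) \<in> ell u" unfolding g proj_pt[OF nzv] .
    hence E: "lin1 (vecmat [1,0,0,u^3] (nu a b c d)) = 0 \<and> lin2 u (vecmat [1,0,0,u^3] (nu a b c d)) = 0"
      by (rule ell_lin)
    have nzv: "[0,1,1,3*u-3*u^2] \<noteq> [0,0,0,0]" by simp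
    have "g (pt [0,1,1,3*u-3*u^2]) \<in> ell u" using pf st by blast
    hence "pt (vecmat [0,1,1,3*u-3*u^2] (nu a b c d)) \<in> ell u" unfolding g proj_pt[OF nzv] .
    hence F: "lin1 (vecmat [0,1,1,3*u-3*u^2] (nu a b c d)) = 0 \<and> lin2 u (vecmat [0,1,1,3*u-3*u^2] (nu a b c d)) = 0"
      by (rule ell_lin)
    from core[OF t2 t3 u0 u1 uq det] E F
    have "(\<exists>l. l\<noteq>0 \<and> a=l \<and> b=0 \<and> c=0 \<and> d=l) \<or>
     (\<exists>l. l\<noteq>0 \<and> a = l*(- (u^2) - u) \<and> b = l*(2*u^3-4*u^2) \<and> c = l*(4*u-2) \<and> d = l*(u^2+u))"
      unfolding linE1 linE2 linF1 linF2 by blast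
    then show "g = g1 \<or> g = g2"
    proof
      assume "\<exists>l. l\<noteq>0 \<and> a=l \<and> b=0 \<and> c=0 \<and> d=l"
      then obtain l where l: "l\<noteq>0" "a=l*1" "b=l*0" "c=l*0" "d=l*1" by auto
      show ?thesis unfolding g g1_def l(2-5) proj_scale[OF l(1)] by simp
    next
      assume "\<exists>l. l\<noteq>0 \<and> a = l*(- (u^2) - u) \<and> b = l*(2*u^3-4*u^2) \<and> c = l*(4*u-2) \<and> d = l*(u^2+u)"
      then obtain l where l: "l\<noteq>0" "a=l*a0" "b=l*b0" "c=l*c0" "d=l*d0"
        unfolding a0_def b0_def c0_def d0_def by auto
      show ?thesis unfolding g g2_def l(2-5) proj_scale[OF l(1)] by simp
    qed
  qed
  have Seq: "stabiliser G (ell u) = {g1, g2}"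
    using conv g1G g2G g1S g2S unfolding stabiliser_def by auto
  have neq: "g1 \<noteq> g2"
  proof (cases "c0 = 0")
    case False
    show ?thesis
    proof
      assume eq: "g1 = g2"
      have nz: "[0,0,0,1] \<noteq> [0,0,0,(0::'a)]" by simp
      have "g1 (pt [0,0,0,1]) = pt [0,0,0,1]" unfolding g1_def proj_pt[OF nz] by (simp add: vecmat_nu)
      moreover have "g2 (pt [0,0,0,1]) = pt [c0^3, c0^2*d0, c0*d0^2, d0^3]"
        unfolding g2_def proj_pt[OF nz] by (simp add: vecmat_nu)
      ultimately have "[c0^3, c0^2*d0, c0*d0^2, d0^3] \<in> pt [0,0,0,1]" using eq
        by (metis pt_mem_self)
      then show False using False unfolding pt_mem by auto
    qed
  next
    case True
    hence "2*(2*u-1) = 0" unfolding c0_def by algebra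
    hence "2*u-1 = 0" using t2 by (simp only: mult_eq_0_iff) simp
    hence hu: "2*u = 1" by simp
    have "u - 2 \<noteq> 0"
    proof
      assume "u - 2 = 0"
      hence "u = 2" by simp
      with hu have h4: "(2::'a)*2 = 1" by simp
      have "(3::'a) = 2*2 - 1" by simp
      with h4 have "(3::'a) = 0" by simp
      with t3 show False by simp
    qed
    hence b0nz: "b0 \<noteq> 0"
    proof -
      have "b0 = 2*u^2*(u-2)" unfolding b0_def by algebra
      then show ?thesis using \<open>u - 2 \<noteq> 0\<close> u0 t2 by simp
    qed
    show ?thesis
    proof
      assume eq: "g1 = g2"
      have nz: "[1,0,0,0] \<noteq> [0,0,0,(0::'a)]" by simp
      have "g1 (pt [1,0,0,0]) = pt [1,0,0,0]" unfolding g1_def proj_pt[OF nz] by (simp add: vecmat_nu)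
      moreover have "g2 (pt [1,0,0,0]) = pt [a0^3, a0^2*b0, a0*b0^2, b0^3]"
        unfolding g2_def proj_pt[OF nz] by (simp add: vecmat_nu)
      ultimately have "[a0^3, a0^2*b0, a0*b0^2, b0^3] \<in> pt [1,0,0,0]" using eq by (metis pt_mem_self)
      then show False using b0nz unfolding pt_mem by auto
    qed
  qed
  show ?thesis unfolding Seq using neq by simp
qed

end
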